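(* Let $\mathcal V$ be a complex vector space, $\Omega\subseteq\mathcal V_{\mathrm{nc}}$ a finitely open nc set, $\mathcal W$ a complex Banach space with an admissible system of matrix norms, $f:\Omega\to\mathcal W_{\mathrm{nc}}$ a G-differentiable nc function, $s\in\mathbb N$ and $Y\in\Omega_s$. Suppose that $$f(X)=\sum_{\ell=0}^\infty\Bigl(X-\bigoplus_{\alpha=1}^mY\Bigr)^{\odot_s\ell}f_\ell\qquad(X\in\Gamma\cap\mathcal V^{sm\times sm},\ m=1,2,\dots),$$ where $\Gamma$ is a finitely open subset of $\Omega$ which contains $\bigoplus_{\alpha=1}^mY$ for every $m\in\mathbb N$, and $f_\ell:(\mathcal V^{s\times s})^\ell\to\mathcal W^{s\times s}$ is $\ell$-linear for each $\ell=0,1,\dots$. Then $f_\ell=\Delta_R^\ell f(Y,\dots,Y)$ ($\ell+1$ arguments) for every $\ell$.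
   Context: $\mathcal V_{\mathrm{nc}}=\coprod_n\mathcal V^{n\times n}$; complex matrices act on matrices over $\mathcal V,\mathcal W$ by multiplication; $X\oplus Y=\begin{bmatrix}X&0\\0&Y\end{bmatrix}$. A nc set is a subset closed under direct sums, $\Omega_n=\Omega\cap\mathcal V^{n\times n}$; a nc function satisfies $f(\Omega_n)\subseteq\mathcal W^{n\times n}$, $f(X\oplus Y)=f(X)\oplus f(Y)$, $f(SXS^{-1})=Sf(X)S^{-1}$ for invertible $S\in\mathbb C^{n\times n}$ with $X,SXS^{-1}\in\Omega_n$. A subset of $\mathcal V_{\mathrm{nc}}$ is finitely open if its intersection with every finite-dimensional subspace $\mathcal U$ of any $\mathcal V^{n\times n}$ is Euclidean-open in $\mathcal U$. An admissible system of matrix norms over $\mathcal W$ is a sequence of norms $\|\cdot\|_n$ on $\mathcal W^{n\times n}$ with constants $C_1(n,m),C_1'(n,m),C_2(n)>0$ such that $C_1(n,m)^{-1}\max\{\|X\|_n,\|Y\|_m\}\le\|X\oplus Y\|_{n+m}\le C_1'(n,m)\max\{\|X\|_n,\|Y\|_m\}$ and $\|SXT\|_n\le C_2(n)\|S\|\|X\|_n\|T\|$. $f$ is G-differentiable if $\lim_{t\to0}(f(X+tZ)-f(X))/t$ exists in $\mathcal W^{n\times n}$ for all $X\in\Omega_n$, $Z\in\mathcal V^{n\times n}$. For $W\in\mathcal V^{sm\times sm}$ viewed as an $m\times m$ matrix of blocks $W_{ij}\in\mathcal V^{s\times s}$, $W^{\odot_s\ell}$ is the $m\times m$ matrix over $(\mathcal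 V^{s\times s})^{\otimes\ell}$ with $(i,k)$ entry $\sum_{j_1,\dots,j_{\ell-1}}W_{ij_1}\otimes\cdots\otimes W_{j_{\ell-1}k}$, $W^{\odot_s\ell}f_\ell\in\mathcal W^{sm\times sm}$ applies $f_\ell$ entrywise, and $W^{\odot_s0}f_0=\bigoplus_{\alpha=1}^mf_0$; the series converges in norm. Higher order operators: finitely open nc sets are right admissible; with $\tilde\Omega=\{SXS^{-1}\}$ and $\tilde f(SXS^{-1})=Sf(X)S^{-1}$ the unique nc extension, for $X^j\in\Omega_{n_j}$, $Z^j\in\mathcal V^{n_{j-1}\times n_j}$, the block upper bidiagonal matrix $B$ with diagonal $X^0,\dots,X^\ell$ and superdiagonal $Z^1,\dots,Z^\ell$ lies in $\tilde\Omega$ and $\Delta_R^\ell f(X^0,\dots,X^\ell)(Z^1,\dots,Z^\ell)$ is the $(1,\ell+1)$ block of $\tilde f(B)$ ($\Delta_R^0f=f$). *)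

theory Defs
  imports "HOL-Analysis.Analysis"
begin

text \<open>Matrices are represented as functions nat => nat => 'a; an n x m matrix is one whose
 entries vanish outside the index range {..<n} x {..<m}.  Elements of V_nc are pairs (n, X)
 with n >= 1 and X an n x n matrix over V.  Complex scalar multiplications on V and W are
 explicit parameters (Isabelle/HOL has no class of complex vector spaces).\<close>

type_synonym 'a mtx = "nat \<Rightarrow> nat \<Rightarrow> 'a"

definition dimmat :: "nat \<Rightarrow> nat \<Rightarrow> ('a::zero) mtx set" where
  "dimmat n m = {M. \<forall>i j. (n \<le> i \<or> m \<le> j) \<longrightarrow> M i j = 0}"

definition ncspace :: "(nat \<times> ('a::zero) mtx) set" where
  "ncspace = {(n, X). 0 < n \<and> X \<in> dimmat n n}"

definition dsum :: "nat \<Rightarrow> ('a::zero) mtx \<Rightarrow> 'a mtx \<Rightarrow> 'a mtx" where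
  "dsum n X Y = (\<lambda>i j. if i < n \<and> j < n then X i j
                      else if n \<le> i \<and> n \<le> j then Y (i - n) (j - n) else 0)"

definition nc_set :: "(nat \<times> ('a::zero) mtx) set \<Rightarrow> bool" where
  "nc_set \<Omega> \<longleftrightarrow> \<Omega> \<subseteq> ncspace \<and>
     (\<forall>n X m Y. (n, X) \<in> \<Omega> \<longrightarrow> (m, Y) \<in> \<Omega> \<longrightarrow> (n + m, dsum n X Y) \<in> \<Omega>)"

definition cmul :: "nat \<Rightarrow> complex mtx \<Rightarrow> complex mtx \<Rightarrow> complex mtx" where
  "cmul n S T = (\<lambda>i k. \<Sum>j<n. S i j * T j k)"

definition lmul :: "(complex \<Rightarrow> 'a::ab_group_add \<Rightarrow> 'a) \<Rightarrow> nat \<Rightarrow> complex mtx \<Rightarrow> 'a mtx \<Rightarrow> 'a mtx" where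
  "lmul sc n S X = (\<lambda>i k. \<Sum>j<n. sc (S i j) (X j k))"

definition rmul :: "(complex \<Rightarrow> 'a::ab_group_add \<Rightarrow> 'a) \<Rightarrow> nat \<Rightarrow> 'a mtx \<Rightarrow> complex mtx \<Rightarrow> 'a mtx" where
  "rmul sc n X T = (\<lambda>i k. \<Sum>j<n. sc (T j k) (X i j))"

definition idm :: "nat \<Rightarrow> complex mtx" where
  "idm n = (\<lambda>i j. if i = j \<and> i < n then 1 else 0)"

definition inv_pair :: "nat \<Rightarrow> complex mtx \<Rightarrow> complex mtx \<Rightarrow> bool" where
  "inv_pair n S T \<longleftrightarrow> S \<in> dimmat n n \<and> T \<in> dimmat n n \<and>
     cmul n S T = idm n \<and> cmul n T S = idm n"

definition sim :: "(complex \<Rightarrow> 'a::ab_group_add \<Rightarrow> 'a) \<Rightarrow> nat \<Rightarrow> complex mtx \<Rightarrow> complex mtx \<Rightarrow> 'a mtx \<Rightarrow> 'a mtx" where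
  "sim sc n S T X = rmul sc n (lmul sc n S X) T"

definition nc_fun :: "(complex \<Rightarrow> 'v::ab_group_add \<Rightarrow> 'v) \<Rightarrow> (complex \<Rightarrow> 'w::ab_group_add \<Rightarrow> 'w)
    \<Rightarrow> (nat \<times> 'v mtx) set \<Rightarrow> (nat \<times> 'v mtx \<Rightarrow> 'w mtx) \<Rightarrow> bool" where
  "nc_fun scV scW \<Omega> f \<longleftrightarrow>
     (\<forall>n X. (n, X) \<in> \<Omega> \<longrightarrow> f (n, X) \<in> dimmat n n) \<and>
     (\<forall>n X m Y. (n, X) \<in> \<Omega> \<longrightarrow> (m, Y) \<in> \<Omega> \<longrightarrow>
        f (n + m, dsum n X Y) = dsum n (f (n, X)) (f (m, Y))) \<and>
     (\<forall>n X S T. (n, X) \<in> \<Omega> \<longrightarrow> inv_pair n S T \<longrightarrow> (n, sim scV n S T X) \<in> \<Omega> \<longrightarrow>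
        f (n, sim scV n S T X) = sim scW n S T (f (n, X)))"

definition lincomb :: "(complex \<Rightarrow> 'a::ab_group_add \<Rightarrow> 'a) \<Rightarrow> nat \<Rightarrow> (nat \<Rightarrow> complex) \<Rightarrow> (nat \<Rightarrow> 'a mtx) \<Rightarrow> 'a mtx" where
  "lincomb sc k c u = (\<lambda>a b. \<Sum>i<k. sc (c i) (u i a b))"

text \<open>Finitely open: for every finite-dimensional subspace U of some V^{n x n}, with basis
 u_0,...,u_{k-1} (so U is identified with C^k via coordinates), the set of coordinate vectors
 of points of the set lying in U is open in C^k (Euclidean topology, written with max-norm balls).\<close>
definition finitely_open :: "(complex \<Rightarrow> 'v::ab_group_add \<Rightarrow> 'v) \<Rightarrow> (nat \<times> 'v mtx) set \<Rightarrow> bool" where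
  "finitely_open sc A \<longleftrightarrow>
     (\<forall>n k (u :: nat \<Rightarrow> 'v mtx).
        (\<forall>i<k. u i \<in> dimmat n n) \<longrightarrow>
        (\<forall>c. lincomb sc k c u = (\<lambda>a b. 0) \<longrightarrow> (\<forall>i<k. c i = 0)) \<longrightarrow>
        (\<forall>c. (n, lincomb sc k c u) \<in> A \<longrightarrow>
           (\<exists>\<epsilon>>0. \<forall>d. (\<forall>i<k. cmod (d i - c i) < \<epsilon>) \<longrightarrow> (n, lincomb sc k d u) \<in> A)))"

text \<open>Complex Banach space structure on 'w: a real Banach space with a complex scalar
 multiplication extending the real one and with absolutely homogeneous norm.\<close>
definition complex_banach :: "(complex \<Rightarrow> 'w::banach \<Rightarrow> 'w) \<Rightarrow> bool" where
  "complex_banach sc \<longleftrightarrow> vector_space sc \<and>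
     (\<forall>r w. sc (complex_of_real r) w = r *\<^sub>R w) \<and>
     (\<forall>c w. norm (sc c w) = cmod c * norm w)"

definition cmat_norm :: "nat \<Rightarrow> complex mtx \<Rightarrow> real" where
  "cmat_norm n S = (SUP x\<in>{x :: nat \<Rightarrow> complex. (\<Sum>j<n. (cmod (x j))\<^sup>2) \<le> 1}.
                      sqrt (\<Sum>i<n. (cmod (\<Sum>j<n. S i j * x j))\<^sup>2))"

definition is_norm_on :: "(complex \<Rightarrow> 'w::ab_group_add \<Rightarrow> 'w) \<Rightarrow> nat \<Rightarrow> ('w mtx \<Rightarrow> real) \<Rightarrow> bool" where
  "is_norm_on sc n N \<longleftrightarrow>
     (\<forall>X\<in>dimmat n n. 0 \<le> N X \<and> (N X = 0 \<longleftrightarrow> X = (\<lambda>i j. 0))) \<and>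
     (\<forall>X\<in>dimmat n n. \<forall>c. N (\<lambda>i j. sc c (X i j)) = cmod c * N X) \<and>
     (\<forall>X\<in>dimmat n n. \<forall>Y\<in>dimmat n n. N (\<lambda>i j. X i j + Y i j) \<le> N X + N Y)"

definition admissible_norms :: "(complex \<Rightarrow> 'w::banach \<Rightarrow> 'w) \<Rightarrow> (nat \<Rightarrow> 'w mtx \<Rightarrow> real) \<Rightarrow> bool" where
  "admissible_norms sc nrm \<longleftrightarrow>
     (\<forall>n>0. is_norm_on sc n (nrm n)) \<and>
     (\<forall>X\<in>dimmat 1 1. nrm 1 X = norm (X 0 0)) \<and>
     (\<exists>C1 C1' :: nat \<Rightarrow> nat \<Rightarrow> real. \<exists>C2 :: nat \<Rightarrow> real.
        (\<forall>n m. 0 < C1 n m \<and> 0 < C1' n m) \<and> (\<forall>n. 0 < C2 n) \<and>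
        (\<forall>n m X Y. 0 < n \<longrightarrow> 0 < m \<longrightarrow> X \<in> dimmat n n \<longrightarrow> Y \<in> dimmat m m \<longrightarrow>
            max (nrm n X) (nrm m Y) / C1 n m \<le> nrm (n + m) (dsum n X Y) \<and>
            nrm (n + m) (dsum n X Y) \<le> C1' n m * max (nrm n X) (nrm m Y)) \<and>
        (\<forall>n S X T. 0 < n \<longrightarrow> S \<in> dimmat n n \<longrightarrow> X \<in> dimmat n n \<longrightarrow> T \<in> dimmat n n \<longrightarrow>
            nrm n (rmul sc n (lmul sc n S X) T) \<le> C2 n * cmat_norm n S * nrm n X * cmat_norm n T))"

text \<open>G-differentiability (limits in W^{n x n}, i.e. entrywise; all norms on it are equivalent).\<close>
definition G_diff :: "(complex \<Rightarrow> 'v::ab_group_add \<Rightarrow> 'v) \<Rightarrow> (complex \<Rightarrow> 'w::banach \<Rightarrow> 'w)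
    \<Rightarrow> (nat \<times> 'v mtx) set \<Rightarrow> (nat \<times> 'v mtx \<Rightarrow> 'w mtx) \<Rightarrow> bool" where
  "G_diff scV scW \<Omega> f \<longleftrightarrow>
     (\<forall>n X Z. (n, X) \<in> \<Omega> \<longrightarrow> Z \<in> dimmat n n \<longrightarrow> (\<forall>i<n. \<forall>j<n. \<exists>L.
        ((\<lambda>t::complex. scW (inverse t)
            (f (n, \<lambda>a b. X a b + scV t (Z a b)) i j - f (n, X) i j)) \<longlongrightarrow> L) (at 0)))"

definition dpow :: "nat \<Rightarrow> ('a::zero) mtx \<Rightarrow> nat \<Rightarrow> 'a mtx" where
  "dpow s Y m = (\<lambda>I J. if I < s * m \<and> J < s * m \<and> I div s = J div s
                        then Y (I mod s) (J mod s) else 0)"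

definition blk :: "nat \<Rightarrow> ('a::zero) mtx \<Rightarrow> nat \<Rightarrow> nat \<Rightarrow> 'a mtx" where
  "blk s W a b = (\<lambda>u v. if u < s \<and> v < s then W (a * s + u) (b * s + v) else 0)"

text \<open>W^{\<odot>_s l} f_l for W in V^{sm x sm}, where the l-linear map f_l is given as a function of
 the list of its l arguments.  The (i,k) block is the sum over all index sequences
 i = j_0, j_1, ..., j_l = k of f_l(W_{j_0 j_1}, ..., W_{j_{l-1} j_l}); for l = 0 this is
 f_0 on the diagonal blocks, i.e. the m-fold direct sum of f_0.\<close>
definition odot_apply :: "nat \<Rightarrow> nat \<Rightarrow> ('v::zero) mtx \<Rightarrow> nat \<Rightarrow> ('v mtx list \<Rightarrow> ('w::comm_monoid_add) mtx) \<Rightarrow> 'w mtx" where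
  "odot_apply s m W l fl = (\<lambda>I J. if I < s * m \<and> J < s * m then
      (\<Sum>js\<in>{js. length js = Suc l \<and> set js \<subseteq> {..<m} \<and> js ! 0 = I div s \<and> js ! l = J div s}.
         fl (map (\<lambda>p. blk s W (js ! p) (js ! Suc p)) [0..<l]) (I mod s) (J mod s))
      else 0)"

definition multilinear :: "(complex \<Rightarrow> 'v::ab_group_add \<Rightarrow> 'v) \<Rightarrow> (complex \<Rightarrow> 'w::ab_group_add \<Rightarrow> 'w)
    \<Rightarrow> nat \<Rightarrow> nat \<Rightarrow> ('v mtx list \<Rightarrow> 'w mtx) \<Rightarrow> bool" where
  "multilinear scV scW s l F \<longleftrightarrow>
     (\<forall>Zs. length Zs = l \<longrightarrow> set Zs \<subseteq> dimmat s s \<longrightarrow> F Zs \<in> dimmat s s) \<and>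
     (\<forall>Zs p A B c. length Zs = l \<longrightarrow> set Zs \<subseteq> dimmat s s \<longrightarrow> p < l \<longrightarrow>
        A \<in> dimmat s s \<longrightarrow> B \<in> dimmat s s \<longrightarrow>
        F (Zs[p := (\<lambda>a b. scV c (A a b) + B a b)]) =
          (\<lambda>a b. scW c (F (Zs[p := A]) a b) + F (Zs[p := B]) a b))"

definition bidiag :: "nat \<Rightarrow> ('a::zero) mtx list \<Rightarrow> 'a mtx list \<Rightarrow> 'a mtx" where
  "bidiag s Xs Zs = (\<lambda>I J. if I < s * length Xs \<and> J < s * length Xs then
      (if I div s = J div s then (Xs ! (I div s)) (I mod s) (J mod s)
       else if J div s = Suc (I div s) then (Zs ! (I div s)) (I mod s) (J mod s)
       else 0) else 0)"

definition nc_ext :: "(complex \<Rightarrow> 'v::ab_group_add \<Rightarrow> 'v) \<Rightarrow> (complex \<Rightarrow> 'w::ab_group_add \<Rightarrow> 'w)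
    \<Rightarrow> (nat \<times> 'v mtx) set \<Rightarrow> (nat \<times> 'v mtx \<Rightarrow> 'w mtx) \<Rightarrow> nat \<Rightarrow> 'v mtx \<Rightarrow> 'w mtx" where
  "nc_ext scV scW \<Omega> f N B = (THE R. \<exists>S T X. (N, X) \<in> \<Omega> \<and> inv_pair N S T \<and>
       B = sim scV N S T X \<and> R = sim scW N S T (f (N, X)))"

text \<open>\<Delta>_R^l f(X^0,...,X^l)(Z^1,...,Z^l) for X^j in \<Omega>_s, Z^j in V^{s x s}
 (l = length Zs, length Xs = l + 1): the (1, l+1) block of the extension applied to the
 bidiagonal matrix.\<close>
definition DeltaR :: "(complex \<Rightarrow> 'v::ab_group_add \<Rightarrow> 'v) \<Rightarrow> (complex \<Rightarrow> 'w::ab_group_add \<Rightarrow> 'w)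
    \<Rightarrow> (nat \<times> 'v mtx) set \<Rightarrow> (nat \<times> 'v mtx \<Rightarrow> 'w mtx) \<Rightarrow> nat \<Rightarrow> 'v mtx list \<Rightarrow> 'v mtx list \<Rightarrow> 'w mtx" where
  "DeltaR scV scW \<Omega> f s Xs Zs = blk s (nc_ext scV scW \<Omega> f (s * length Xs) (bidiag s Xs Zs)) 0 (length Zs)"

end

theory Submission
  imports Defs
begin

lemma mod_mult: "module ((*) :: complex \<Rightarrow> complex \<Rightarrow> complex)"
  by unfold_locales (auto simp: algebra_simps)

lemma cmul_lmul: "cmul n S T = lmul (*) n S T"
  unfolding cmul_def lmul_def by simp

lemma lmul_assoc:
  assumes V: "module sc"
  shows "lmul sc n S (lmul sc n S' X) = lmul sc n (cmul n S S') X"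
proof -
  interpret module sc by fact
  have "(\<Sum>j<n. sc (S i j) (\<Sum>j'<n. sc (S' j j') (X j' k)))
      = (\<Sum>j'<n. sc (\<Sum>j<n. S i j * S' j j') (X j' k))" for i k
  proof -
    have "(\<Sum>j<n. sc (S i j) (\<Sum>j'<n. sc (S' j j') (X j' k)))
        = (\<Sum>j<n. \<Sum>j'<n. sc (S i j * S' j j') (X j' k))"
      by (simp only: scale_sum_right scale_scale)
    also have "\<dots> = (\<Sum>j'<n. \<Sum>j<n. sc (S i j * S' j j') (X j' k))"
      by (rule sum.swap)
    also have "\<dots> = (\<Sum>j'<n. sc (\<Sum>j<n. S i j * S' j j') (X j' k))"
      by (simp only: scale_sum_left)
    finally show ?thesis .
  qed
  then show ?thesis unfolding lmul_def cmul_def by (intro ext)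
qed

lemma rmul_assoc:
  assumes V: "module sc"
  shows "rmul sc n (rmul sc n X T') T = rmul sc n X (cmul n T' T)"
proof -
  interpret module sc by fact
  have "(\<Sum>j<n. sc (T j k) (\<Sum>j'<n. sc (T' j' j) (X i j')))
      = (\<Sum>j'<n. sc (\<Sum>j<n. T' j' j * T j k) (X i j'))" for i k
  proof -
    have "(\<Sum>j<n. sc (T j k) (\<Sum>j'<n. sc (T' j' j) (X i j')))
        = (\<Sum>j<n. \<Sum>j'<n. sc (T' j' j * T j k) (X i j'))"
      by (simp only: scale_sum_right scale_scale mult.commute)
    also have "\<dots> = (\<Sum>j'<n. \<Sum>j<n. sc (T' j' j * T j k) (X i j'))"
      by (rule sum.swap)
    also have "\<dots> = (\<Sum>j'<n. sc (\<Sum>j<n. T' j' j * T j k) (X i j'))"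
      by (simp only: scale_sum_left)
    finally show ?thesis .
  qed
  then show ?thesis unfolding rmul_def cmul_def by (intro ext)
qed

lemma lmul_rmul:
  assumes V: "module sc"
  shows "lmul sc n S (rmul sc n X T) = rmul sc n (lmul sc n S X) T"
proof -
  interpret module sc by fact
  have "(\<Sum>j<n. sc (S i j) (\<Sum>j'<n. sc (T j' k) (X j j')))
      = (\<Sum>j'<n. sc (T j' k) (\<Sum>j<n. sc (S i j) (X j j')))" for i k
  proof -
    have "(\<Sum>j<n. sc (S i j) (\<Sum>j'<n. sc (T j' k) (X j j')))
        = (\<Sum>j<n. \<Sum>j'<n. sc (T j' k) (sc (S i j) (X j j')))"
      by (simp only: scale_sum_right scale_left_commute)
    also have "\<dots> = (\<Sum>j'<n. \<Sum>j<n. sc (T j' k) (sc (S i j) (X j j')))"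
      by (rule sum.swap)
    also have "\<dots> = (\<Sum>j'<n. sc (T j' k) (\<Sum>j<n. sc (S i j) (X j j')))"
      by (simp only: scale_sum_right)
    finally show ?thesis .
  qed
  then show ?thesis unfolding rmul_def lmul_def by (intro ext)
qed

lemma sum_if_scale:
  assumes V: "module sc"
  shows "(\<Sum>j<(n::nat). sc (if P j then c j else 0) (x j)) = (\<Sum>j\<in>{j. j<n \<and> P j}. sc (c j) (x j))"
proof -
  interpret module sc by fact
  show ?thesis by (rule sum.mono_neutral_cong_right) (auto simp: finite_nat_set_iff_bounded)
qed

lemma lmul_idm:
  assumes V: "module sc" and X: "X \<in> dimmat n n"
  shows "lmul sc n (idm n) X = X"
proof -
  interpret module sc by fact
  have "lmul sc n (idm n) X i k = X i k" for i k
  proof (cases "i < n")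
    case True
    have "lmul sc n (idm n) X i k = (\<Sum>j\<in>{i}. sc 1 (X j k))"
      unfolding lmul_def idm_def sum_if_scale[OF V] by (rule sum.cong) (use True in auto)
    then show ?thesis by simp
  next
    case False then show ?thesis using X by (simp add: lmul_def idm_def dimmat_def)
  qed
  then show ?thesis by (intro ext)
qed

lemma rmul_idm:
  assumes V: "module sc" and X: "X \<in> dimmat n n"
  shows "rmul sc n X (idm n) = X"
proof -
  interpret module sc by fact
  have "rmul sc n X (idm n) i k = X i k" for i k
  proof (cases "k < n")
    case True
    have "rmul sc n X (idm n) i k = (\<Sum>j\<in>{k}. sc 1 (X i j))"
      unfolding rmul_def idm_def sum_if_scale[OF V] by (rule sum.cong) (use True in auto)
    then show ?thesis by simp
  next
    case False then show ?thesis using X by (simp add: rmul_def idm_def dimmat_def)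
  qed
  then show ?thesis by (intro ext)
qed

lemma cmul_assoc: "cmul n (cmul n A B) C = cmul n A (cmul n B C)"
  unfolding cmul_lmul using lmul_assoc[OF mod_mult, symmetric] cmul_lmul by metis

lemma cmul_idm_left: "A \<in> dimmat n n \<Longrightarrow> cmul n (idm n) A = A"
  unfolding cmul_lmul by (rule lmul_idm[OF mod_mult])

lemma cmul_idm_right: "A \<in> dimmat n n \<Longrightarrow> cmul n A (idm n) = A"
proof -
  assume "A \<in> dimmat n n"
  then have "rmul (*) n A (idm n) = A" by (rule rmul_idm[OF mod_mult])
  then show ?thesis unfolding rmul_def cmul_def by (simp add: mult.commute)
qed

lemma lmul_dimmat:
  assumes V: "module sc" and "S \<in> dimmat n n" "X \<in> dimmat n n"
  shows "lmul sc n S X \<in> dimmat n n"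
proof -
  interpret module sc by fact
  show ?thesis using assms(2,3) unfolding dimmat_def lmul_def by auto
qed

lemma rmul_dimmat:
  assumes V: "module sc" and "X \<in> dimmat n n" "T \<in> dimmat n n"
  shows "rmul sc n X T \<in> dimmat n n"
proof -
  interpret module sc by fact
  show ?thesis using assms(2,3) unfolding dimmat_def rmul_def by auto
qed

lemma cmul_dimmat: "S \<in> dimmat n n \<Longrightarrow> T \<in> dimmat n n \<Longrightarrow> cmul n S T \<in> dimmat n n"
  unfolding cmul_lmul by (rule lmul_dimmat[OF mod_mult])

lemma sim_sim:
  assumes V: "module sc"
  shows "sim sc n S T (sim sc n S2 T2 X) = sim sc n (cmul n S S2) (cmul n T2 T) X"
  unfolding sim_def by (simp only: lmul_rmul[OF V] lmul_assoc[OF V] rmul_assoc[OF V])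

lemma sim_dimmat:
  assumes V: "module sc" and "S \<in> dimmat n n" "X \<in> dimmat n n" "T \<in> dimmat n n"
  shows "sim sc n S T X \<in> dimmat n n"
  unfolding sim_def by (rule rmul_dimmat[OF V lmul_dimmat[OF V]]) (use assms in auto)

lemma sim_idm:
  assumes V: "module sc" and "X \<in> dimmat n n"
  shows "sim sc n (idm n) (idm n) X = X"
  unfolding sim_def by (simp add: assms lmul_idm rmul_idm)

lemma inv_pair_sym: "inv_pair n S T \<Longrightarrow> inv_pair n T S"
  unfolding inv_pair_def by auto

lemma inv_pair_mul:
  assumes "inv_pair n S T" "inv_pair n S2 T2"
  shows "inv_pair n (cmul n S S2) (cmul n T2 T)"
proof -
  have d: "S \<in> dimmat n n" "T \<in> dimmat n n" "S2 \<in> dimmat n n" "T2 \<in> dimmat n n"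
    and i: "cmul n S T = idm n" "cmul n T S = idm n" "cmul n S2 T2 = idm n" "cmul n T2 S2 = idm n"
    using assms unfolding inv_pair_def by auto
  have "cmul n (cmul n S S2) (cmul n T2 T) = cmul n S (cmul n (cmul n S2 T2) T)"
    by (simp add: cmul_assoc)
  also have "\<dots> = idm n" using i d by (simp add: cmul_idm_left)
  finally have 1: "cmul n (cmul n S S2) (cmul n T2 T) = idm n" .
  have "cmul n (cmul n T2 T) (cmul n S S2) = cmul n T2 (cmul n (cmul n T S) S2)"
    by (simp add: cmul_assoc)
  also have "\<dots> = idm n" using i d by (simp add: cmul_idm_left)
  finally have 2: "cmul n (cmul n T2 T) (cmul n S S2) = idm n" .
  show ?thesis unfolding inv_pair_def using 1 2 d cmul_dimmat by auto
qed


lemma nc_set_dimmat: "nc_set \<Omega> \<Longrightarrow> (n, X) \<in> \<Omega> \<Longrightarrow> X \<in> dimmat n n"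
  unfolding nc_set_def ncspace_def by auto

lemma nc_ext_eq:
  assumes V: "module scV" and W: "module scW" and Om: "nc_set \<Omega>" and fnc: "nc_fun scV scW \<Omega> f"
    and X: "(N, X) \<in> \<Omega>" and P: "inv_pair N S T"
  shows "nc_ext scV scW \<Omega> f N (sim scV N S T X) = sim scW N S T (f (N, X))"
proof -
  have dX: "X \<in> dimmat N N" using nc_set_dimmat[OF Om X] .
  have dfX: "f (N, X) \<in> dimmat N N" using fnc X unfolding nc_fun_def by auto
  have dS: "S \<in> dimmat N N" "T \<in> dimmat N N" "cmul N S T = idm N" "cmul N T S = idm N"
    using P unfolding inv_pair_def by auto
  have uniq: "R = sim scW N S T (f (N, X))"
    if X2: "(N, X2) \<in> \<Omega>" and P2: "inv_pair N S2 T2" and E: "sim scV N S T X = sim scV N S2 T2 X2"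
      and R: "R = sim scW N S2 T2 (f (N, X2))" for R S2 T2 X2
  proof -
    have dX2: "X2 \<in> dimmat N N" using nc_set_dimmat[OF Om X2] .
    have dS2: "S2 \<in> dimmat N N" "T2 \<in> dimmat N N" "cmul N S2 T2 = idm N" "cmul N T2 S2 = idm N"
      using P2 unfolding inv_pair_def by auto
    have "X2 = sim scV N (idm N) (idm N) X2" using sim_idm[OF V dX2] by simp
    also have "\<dots> = sim scV N T2 S2 (sim scV N S2 T2 X2)" using sim_sim[OF V] dS2 by simp
    also have "\<dots> = sim scV N T2 S2 (sim scV N S T X)" using E by simp
    also have "\<dots> = sim scV N (cmul N T2 S) (cmul N T S2) X" using sim_sim[OF V] by simp
    finally have X2e: "X2 = sim scV N (cmul N T2 S) (cmul N T S2) X" .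
    have PR: "inv_pair N (cmul N T2 S) (cmul N T S2)"
      using inv_pair_mul[OF inv_pair_sym[OF P2] P] .
    have "f (N, X2) = sim scW N (cmul N T2 S) (cmul N T S2) (f (N, X))"
      using fnc X PR X2 X2e unfolding nc_fun_def by metis
    then have "R = sim scW N (cmul N S2 (cmul N T2 S)) (cmul N (cmul N T S2) T2) (f (N, X))"
      using R sim_sim[OF W] by simp
    also have "cmul N S2 (cmul N T2 S) = S"
      using dS dS2 by (simp add: cmul_assoc[symmetric] cmul_idm_left)
    also have "cmul N (cmul N T S2) T2 = T"
      using dS dS2 by (simp add: cmul_assoc cmul_idm_right)
    finally show ?thesis .
  qed
  show ?thesis unfolding nc_ext_def
  proof (rule the_equality)
    show "\<exists>S' T' X'. (N, X') \<in> \<Omega> \<and> inv_pair N S' T' \<and> sim scV N S T X = sim scV N S' T' X' \<and>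
        sim scW N S T (f (N, X)) = sim scW N S' T' (f (N, X'))"
      using X P by blast
  next
    fix R assume "\<exists>S' T' X'. (N, X') \<in> \<Omega> \<and> inv_pair N S' T' \<and> sim scV N S T X = sim scV N S' T' X' \<and>
        R = sim scW N S' T' (f (N, X'))"
    then show "R = sim scW N S T (f (N, X))" using uniq by blast
  qed
qed

lemma lmul_diag:
  assumes V: "module sc"
  shows "lmul sc n (\<lambda>a b. if a = b \<and> a < n then d a else 0) X
      = (\<lambda>a k. if a < n then sc (d a) (X a k) else 0)"
proof -
  interpret module sc by fact
  have "lmul sc n (\<lambda>a b. if a = b \<and> a < n then d a else 0) X a k = (if a < n then sc (d a) (X a k) else 0)" for a k
  proof (cases "a < n")
    case True
    have "lmul sc n (\<lambda>a b. if a = b \<and> a < n then d a else 0) X a k = (\<Sum>j\<in>{a}. sc (d j) (X j k))"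
      unfolding lmul_def sum_if_scale[OF V] by (rule sum.cong) (use True in auto)
    then show ?thesis using True by simp
  next
    case False then show ?thesis by (simp add: lmul_def)
  qed
  then show ?thesis by (intro ext)
qed

lemma rmul_diag:
  assumes V: "module sc"
  shows "rmul sc n X (\<lambda>a b. if a = b \<and> a < n then d a else 0)
      = (\<lambda>a k. if k < n then sc (d k) (X a k) else 0)"
proof -
  interpret module sc by fact
  have "rmul sc n X (\<lambda>a b. if a = b \<and> a < n then d a else 0) a k = (if k < n then sc (d k) (X a k) else 0)" for a k
  proof (cases "k < n")
    case True
    have "rmul sc n X (\<lambda>a b. if a = b \<and> a < n then d a else 0) a k = (\<Sum>j\<in>{k}. sc (d j) (X a j))"
      unfolding rmul_def sum_if_scale[OF V] by (rule sum.cong) (use True in auto)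
    then show ?thesis using True by simp
  next
    case False then show ?thesis by (simp add: rmul_def)
  qed
  then show ?thesis by (intro ext)
qed

lemma sim_diag:
  assumes V: "module sc"
  shows "sim sc n (\<lambda>a b. if a = b \<and> a < n then d a else 0) (\<lambda>a b. if a = b \<and> a < n then d' a else 0) X
      = (\<lambda>a b. if a < n \<and> b < n then sc (d' b * d a) (X a b) else 0)"
proof -
  interpret module sc by fact
  show ?thesis unfolding sim_def lmul_diag[OF V] rmul_diag[OF V] by (intro ext) auto
qed

lemma inv_pair_diag:
  assumes "\<And>a. a < n \<Longrightarrow> d a * d' a = 1"
  shows "inv_pair n (\<lambda>a b. if a = b \<and> a < n then d a else 0) (\<lambda>a b. if a = b \<and> a < n then d' a else 0)"
proof -
  have 1: "cmul n (\<lambda>a b. if a = b \<and> a < n then d a else 0) (\<lambda>a b. if a = b \<and> a < n then d' a else 0) = idm n"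
    unfolding cmul_lmul lmul_diag[OF mod_mult] idm_def using assms by (intro ext) auto
  have 2: "cmul n (\<lambda>a b. if a = b \<and> a < n then d' a else 0) (\<lambda>a b. if a = b \<and> a < n then d a else 0) = idm n"
    unfolding cmul_lmul lmul_diag[OF mod_mult] idm_def using assms by (intro ext) (auto simp: mult.commute)
  show ?thesis unfolding inv_pair_def using 1 2 by (auto simp: dimmat_def)
qed

lemma entry_bound:
  fixes scW :: "complex \<Rightarrow> 'w::banach \<Rightarrow> 'w"
  assumes W: "module scW" and adm: "admissible_norms scW nrm" and n: "0 < n" and ij: "i < n" "j < n"
  shows "\<exists>K. \<forall>X\<in>(dimmat n n :: 'w mtx set). norm (X i j) \<le> K * nrm n X"
proof -
  interpret module scW by fact
  obtain C1 :: "nat \<Rightarrow> nat \<Rightarrow> real" and C2 :: "nat \<Rightarrow> real" where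
    C1: "\<And>n m. 0 < C1 n m" and
    ds: "\<And>n m X Y. 0 < n \<Longrightarrow> 0 < m \<Longrightarrow> X \<in> dimmat n n \<Longrightarrow> Y \<in> dimmat m m \<Longrightarrow>
            max (nrm n X) (nrm m Y) / C1 n m \<le> nrm (n + m) (dsum n X Y)" and
    C2: "\<And>n S X T. 0 < n \<Longrightarrow> S \<in> dimmat n n \<Longrightarrow> X \<in> dimmat n n \<Longrightarrow> T \<in> dimmat n n \<Longrightarrow>
            nrm n (rmul scW n (lmul scW n S X) T) \<le> C2 n * cmat_norm n S * nrm n X * cmat_norm n T"
  proof -
    obtain C1 C1' :: "nat \<Rightarrow> nat \<Rightarrow> real" and C2 :: "nat \<Rightarrow> real" where
      H1: "\<forall>n m. 0 < C1 n m \<and> 0 < C1' n m" and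
      H2: "\<forall>n m X Y. 0 < n \<longrightarrow> 0 < m \<longrightarrow> X \<in> dimmat n n \<longrightarrow> Y \<in> dimmat m m \<longrightarrow>
            max (nrm n X) (nrm m Y) / C1 n m \<le> nrm (n + m) (dsum n X Y) \<and>
            nrm (n + m) (dsum n X Y) \<le> C1' n m * max (nrm n X) (nrm m Y)" and
      H3: "\<forall>n S X T. 0 < n \<longrightarrow> S \<in> dimmat n n \<longrightarrow> X \<in> dimmat n n \<longrightarrow> T \<in> dimmat n n \<longrightarrow>
            nrm n (rmul scW n (lmul scW n S X) T) \<le> C2 n * cmat_norm n S * nrm n X * cmat_norm n T"
      using adm[unfolded admissible_norms_def, THEN conjunct2, THEN conjunct2] by (elim exE conjE)
    show ?thesis
    proof (rule that[of C1 C2])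
      show "0 < C1 n m" for n m using H1 by simp
      show "max (nrm n X) (nrm m Y) / C1 n m \<le> nrm (n + m) (dsum n X Y)"
        if "0 < n" "0 < m" "X \<in> dimmat n n" "Y \<in> dimmat m m" for n m X Y
        using H2 that by simp
      show "nrm n (rmul scW n (lmul scW n S X) T) \<le> C2 n * cmat_norm n S * nrm n X * cmat_norm n T"
        if "0 < n" "S \<in> dimmat n n" "X \<in> dimmat n n" "T \<in> dimmat n n" for n S X T
        using H3 that by simp
    qed
  qed
  have n1: "\<And>X. X \<in> dimmat 1 1 \<Longrightarrow> nrm 1 X = norm (X 0 0)"
    using adm[unfolded admissible_norms_def, THEN conjunct2, THEN conjunct1] by blast
  define S :: "complex mtx" where "S = (\<lambda>a b. if a = 0 \<and> b = i then 1 else 0)"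
  define T :: "complex mtx" where "T = (\<lambda>a b. if a = j \<and> b = 0 then 1 else 0)"
  have dS: "S \<in> dimmat n n" "T \<in> dimmat n n" using n ij unfolding S_def T_def dimmat_def by auto
  have E: "rmul scW n (lmul scW n S X) T = (\<lambda>a b. if a = 0 \<and> b = 0 then X i j else 0)" for X :: "'w mtx"
  proof -
    have L: "lmul scW n S X = (\<lambda>a k. if a = 0 then X i k else 0)"
    proof (intro ext)
      fix a k
      have "lmul scW n S X a k = (\<Sum>j'\<in>{j'. j' < n \<and> a = 0 \<and> j' = i}. scW 1 (X j' k))"
        unfolding lmul_def S_def by (rule sum_if_scale[OF W])
      also have "{j'. j' < n \<and> a = 0 \<and> j' = i} = (if a = 0 then {i} else {})" using ij by auto
      finally show "lmul scW n S X a k = (if a = 0 then X i k else 0)" by simp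
    qed
    show ?thesis
    proof (intro ext)
      fix a b
      have "rmul scW n (lmul scW n S X) T a b
          = (\<Sum>j'\<in>{j'. j' < n \<and> j' = j \<and> b = 0}. scW 1 (lmul scW n S X a j'))"
        unfolding rmul_def T_def by (rule sum_if_scale[OF W])
      also have "{j'. j' < n \<and> j' = j \<and> b = 0} = (if b = 0 then {j} else {})" using ij by auto
      finally show "rmul scW n (lmul scW n S X) T a b = (if a = 0 \<and> b = 0 then X i j else 0)"
        by (simp add: L)
    qed
  qed
  have dE: "(\<lambda>a b. if a = 0 \<and> b = 0 then X i j else 0) \<in> dimmat 1 1" for X :: "'w mtx"
    unfolding dimmat_def by auto
  have nE: "nrm 1 (\<lambda>a b. if a = 0 \<and> b = 0 then X i j else 0) = norm (X i j)" for X :: "'w mtx"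
    using n1[OF dE] by simp
  show ?thesis
  proof (cases "n = 1")
    case True
    show ?thesis
    proof (intro exI ballI)
      fix X :: "'w mtx" assume X: "X \<in> dimmat n n"
      have "norm (X i j) = nrm n (rmul scW n (lmul scW n S X) T)" using True E nE by simp
      also have "\<dots> \<le> C2 n * cmat_norm n S * nrm n X * cmat_norm n T" using C2[OF n dS(1) X dS(2)] .
      also have "\<dots> = (C2 n * cmat_norm n S * cmat_norm n T) * nrm n X" by simp
      finally show "norm (X i j) \<le> (C2 n * cmat_norm n S * cmat_norm n T) * nrm n X" .
    qed
  next
    case False
    then have n2: "0 < n - 1" "1 + (n - 1) = n" using n by auto
    show ?thesis
    proof (intro exI ballI)
      fix X :: "'w mtx" assume X: "X \<in> dimmat n n"
      let ?E = "(\<lambda>a b. if a = 0 \<and> b = 0 then X i j else 0)"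
      have z: "(\<lambda>a b. 0) \<in> dimmat (n - 1) (n - 1)" unfolding dimmat_def by auto
      have dsE: "dsum 1 ?E (\<lambda>a b. 0) = ?E" unfolding dsum_def by (intro ext) auto
      have "norm (X i j) / C1 1 (n - 1) \<le> max (nrm 1 ?E) (nrm (n - 1) (\<lambda>a b. 0)) / C1 1 (n - 1)"
        using C1[of 1 "n - 1"] nE[of X] by (intro divide_right_mono) auto
      also have "\<dots> \<le> nrm (1 + (n - 1)) (dsum 1 ?E (\<lambda>a b. 0))"
        using ds[OF _ n2(1) dE z] by simp
      also have "\<dots> = nrm n (rmul scW n (lmul scW n S X) T)" using dsE n2(2) E by simp
      also have "\<dots> \<le> C2 n * cmat_norm n S * nrm n X * cmat_norm n T" using C2[OF n dS(1) X dS(2)] .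
      finally have "norm (X i j) \<le> C1 1 (n - 1) * (C2 n * cmat_norm n S * nrm n X * cmat_norm n T)"
        using C1[of 1 "n - 1"] by (simp add: divide_le_eq mult.commute)
      then show "norm (X i j) \<le> (C1 1 (n - 1) * C2 n * cmat_norm n S * cmat_norm n T) * nrm n X"
        by (simp add: algebra_simps)
    qed
  qed
qed

lemma ml_zero:
  assumes W: "module scW" and F: "multilinear scV scW s k F" and V: "module scV"
    and Zs: "length Zs = k" "set Zs \<subseteq> dimmat s s" and p: "p < k"
  shows "F (Zs[p := (\<lambda>a b. 0)]) = (\<lambda>a b. 0)"
proof -
  interpret w: module scW by fact
  interpret v: module scV by fact
  have z: "(\<lambda>a b. 0) \<in> dimmat s s" unfolding dimmat_def by auto
  have "F (Zs[p := (\<lambda>a b. scV 1 ((\<lambda>a b. 0) a b) + (\<lambda>a b. 0) a b)]) =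
        (\<lambda>a b. scW 1 (F (Zs[p := (\<lambda>a b. 0)]) a b) + F (Zs[p := (\<lambda>a b. 0)]) a b)"
    using F Zs p z unfolding multilinear_def by blast
  then have "F (Zs[p := (\<lambda>a b. 0)]) = (\<lambda>a b. F (Zs[p := (\<lambda>a b. 0)]) a b + F (Zs[p := (\<lambda>a b. 0)]) a b)"
    by simp
  then have h: "F (Zs[p := (\<lambda>a b. 0)]) a b = F (Zs[p := (\<lambda>a b. 0)]) a b + F (Zs[p := (\<lambda>a b. 0)]) a b" for a b
    by (rule fun_cong[OF fun_cong])
  show ?thesis by (intro ext) (use h in simp)
qed

lemma ml_zero':
  assumes W: "module scW" and F: "multilinear scV scW s k F" and V: "module scV"
    and Zs: "length Zs = k" "set Zs \<subseteq> dimmat s s" and p: "p < k" and z: "Zs ! p = (\<lambda>a b. 0)"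
  shows "F Zs = (\<lambda>a b. 0)"
proof -
  have "Zs = Zs[p := Zs ! p]" by simp
  then show ?thesis using ml_zero[OF W F V Zs p] z by simp
qed

lemma ml_scale:
  assumes W: "module scW" and F: "multilinear scV scW s k F" and V: "module scV"
    and Zs: "length Zs = k" "set Zs \<subseteq> dimmat s s"
  shows "F (map (\<lambda>Z a b. scV t (Z a b)) Zs) = (\<lambda>a b. scW (t ^ k) (F Zs a b))"
proof -
  interpret w: module scW by fact
  interpret v: module scV by fact
  define G where "G q = map (\<lambda>p. if p < q then (\<lambda>a b. scV t ((Zs ! p) a b)) else Zs ! p) [0..<k]" for q
  have dZ: "\<And>p. p < k \<Longrightarrow> Zs ! p \<in> dimmat s s" using Zs nth_mem by blast
  have dG: "set (G q) \<subseteq> dimmat s s" "length (G q) = k" for q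
    using dZ unfolding G_def dimmat_def by auto
  have IH: "q \<le> k \<Longrightarrow> F (G q) = (\<lambda>a b. scW (t ^ q) (F Zs a b))" for q
  proof (induction q)
    case 0
    have "G 0 = Zs" unfolding G_def using Zs by (intro nth_equalityI) auto
    then show ?case by simp
  next
    case (Suc q)
    then have q: "q < k" by simp
    have z: "(\<lambda>a b. 0) \<in> dimmat s s" unfolding dimmat_def by auto
    have e1: "G (Suc q) = (G q)[q := (\<lambda>a b. scV t ((Zs ! q) a b) + (\<lambda>a b. 0) a b)]"
    proof (rule nth_equalityI)
      show "length (G (Suc q)) = length ((G q)[q := (\<lambda>a b. scV t ((Zs ! q) a b) + (\<lambda>a b. 0) a b)])"
        using dG by simp
      fix i assume "i < length (G (Suc q))"
      then show "G (Suc q) ! i = (G q)[q := (\<lambda>a b. scV t ((Zs ! q) a b) + (\<lambda>a b. 0) a b)] ! i"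
        using dG unfolding G_def by (cases "i = q") (auto simp: nth_list_update)
    qed
    have e2: "(G q)[q := Zs ! q] = G q"
      unfolding G_def by (intro nth_equalityI) (auto simp: nth_list_update)
    have "F (G (Suc q)) = (\<lambda>a b. scW t (F ((G q)[q := Zs ! q]) a b) + F ((G q)[q := (\<lambda>a b. 0)]) a b)"
      unfolding e1 using F dG q dZ[OF q] z unfolding multilinear_def by blast
    also have "F ((G q)[q := (\<lambda>a b. 0)]) = (\<lambda>a b. 0)" using ml_zero[OF W F V dG(2) dG(1) q] .
    finally show ?case using Suc e2 q by (simp add: mult.commute)
  qed
  have Gk: "G k = map (\<lambda>Z a b. scV t (Z a b)) Zs"
    unfolding G_def using Zs by (intro nth_equalityI) auto
  show ?thesis using IH[OF order_refl] unfolding Gk .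
qed


lemma idx_lt: "a < m \<Longrightarrow> x < (s::nat) \<Longrightarrow> a * s + x < s * m"
proof -
  assume "a < m" "x < s"
  then have "a * s + x < Suc a * s" by simp
  also have "\<dots> \<le> m * s" using \<open>a < m\<close> by (intro mult_le_mono1) simp
  finally show ?thesis by (simp add: mult.commute)
qed

lemma idx_div2: "x < (s::nat) \<Longrightarrow> (s + c * s + x) div s = Suc c"
proof -
  assume "x < s"
  have e: "s + c * s + x = x + Suc c * s" by simp
  show ?thesis unfolding e using \<open>x < s\<close> by (simp del: mult_Suc)
qed

lemma idx_mod2: "x < (s::nat) \<Longrightarrow> (s + c * s + x) mod s = x"
proof -
  assume "x < s"
  have e: "s + c * s + x = x + Suc c * s" by simp
  show ?thesis unfolding e using \<open>x < s\<close> by (simp del: mult_Suc)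
qed

lemma idx_div: "x < (s::nat) \<Longrightarrow> (a * s + x) div s = a"
  by simp

lemma idx_mod: "x < (s::nat) \<Longrightarrow> (a * s + x) mod s = x"
  by simp

lemma div_lt: "a < s * m \<Longrightarrow> a div s < (m::nat)"
  by (rule less_mult_imp_div_less) (simp add: mult.commute)

lemma blk_dimmat: "blk s W a b \<in> dimmat s s"
  unfolding blk_def dimmat_def by auto

lemma odot_entry:
  assumes W: "module scW" and V: "module scV" and s: "0 < s"
    and fl: "\<And>k. multilinear scV scW s k (fl k)"
    and m: "m = Suc l"
    and blkW: "\<And>a b. a < m \<Longrightarrow> b < m \<Longrightarrow> blk s Wm a b = (if b = Suc a then Bz a else (\<lambda>x y. 0))"
    and xy: "x < s" "y < s"
  shows "odot_apply s m Wm k (fl k) x (l * s + y) = (if k = l then fl l (map Bz [0..<l]) x y else 0)"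
proof -
  have lt: "x < s * m" "l * s + y < s * m" using idx_lt[of 0 m x s] idx_lt[of l m y s] m xy by auto
  have dv: "x div s = 0" "x mod s = x" "(l * s + y) div s = l" "(l * s + y) mod s = y" using xy by auto
  define A where "A = {js. length js = Suc k \<and> set js \<subseteq> {..<m} \<and> js ! 0 = 0 \<and> js ! k = l}"
  define T where "T js = fl k (map (\<lambda>p. blk s Wm (js ! p) (js ! Suc p)) [0..<k]) x y" for js
  have od: "odot_apply s m Wm k (fl k) x (l * s + y) = sum T A"
    unfolding odot_apply_def A_def T_def using lt dv by simp
  have finA: "finite A"
  proof (rule finite_subset)
    show "A \<subseteq> {js. set js \<subseteq> {..<m} \<and> length js = Suc k}" unfolding A_def by auto
    show "finite {js. set js \<subseteq> {..<m} \<and> length js = Suc k}" by (rule finite_lists_length_eq) simp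
  qed
  have inm: "js ! p < m" if "js \<in> A" "p \<le> k" for js p
  proof -
    have "p < length js" "set js \<subseteq> {..<m}" using that unfolding A_def by auto
    then show ?thesis by (meson lessThan_iff nth_mem subsetD)
  qed
  have zero: "T js = 0" if js: "js \<in> A" and nc: "\<not> (\<forall>p<k. js ! Suc p = Suc (js ! p))" for js
  proof -
    obtain p where p: "p < k" "js ! Suc p \<noteq> Suc (js ! p)" using nc by blast
    let ?Bs = "map (\<lambda>p. blk s Wm (js ! p) (js ! Suc p)) [0..<k]"
    have "?Bs ! p = (\<lambda>x y. 0)" using p blkW[OF inm[OF js, of p] inm[OF js, of "Suc p"]] by simp
    moreover have "set ?Bs \<subseteq> dimmat s s" using blk_dimmat by auto
    ultimately have "fl k ?Bs = (\<lambda>a b. 0)" using ml_zero'[OF W fl V _ _ p(1)] by simp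
    then show ?thesis unfolding T_def by simp
  qed
  have chain: "js ! p = p" if js: "js \<in> A" and c: "\<forall>p<k. js ! Suc p = Suc (js ! p)" and "p \<le> k" for js p
    using \<open>p \<le> k\<close>
  proof (induction p)
    case 0 then show ?case using js unfolding A_def by simp
  next
    case (Suc p) then show ?case using c by simp
  qed
  show ?thesis
  proof (cases "k = l")
    case False
    have "T js = 0" if "js \<in> A" for js
    proof (rule zero[OF that], rule notI)
      assume c: "\<forall>p<k. js ! Suc p = Suc (js ! p)"
      have "js ! k = k" using chain[OF that c] by simp
      moreover have "js ! k = l" using that unfolding A_def by simp
      ultimately show False using False by simp
    qed
    then show ?thesis using od False by simp
  next
    case True
    define j0 where "j0 = [0..<Suc l]"
    have j0A: "j0 \<in> A" unfolding A_def j0_def using True m by (auto simp del: upt_Suc)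
    have others: "T js = 0" if "js \<in> A - {j0}" for js
    proof (rule zero)
      show "js \<in> A" using that by simp
      show "\<not> (\<forall>p<k. js ! Suc p = Suc (js ! p))"
      proof
        assume c: "\<forall>p<k. js ! Suc p = Suc (js ! p)"
        have "js = j0"
        proof (rule nth_equalityI)
          show "length js = length j0" using that True unfolding A_def j0_def by simp
          fix i assume "i < length js"
          then have "i \<le> k" using that unfolding A_def by simp
          then show "js ! i = j0 ! i" using chain[of js, OF _ c] that True unfolding j0_def
            by (simp del: upt_Suc add: nth_upt)
        qed
        then show False using that by simp
      qed
    qed
    have "sum T A = T j0 + sum T (A - {j0})" using finA j0A by (rule sum.remove)
    also have "sum T (A - {j0}) = 0" using others by simp
    also have "T j0 = fl l (map Bz [0..<l]) x y"
    proof -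
      have mq: "map (\<lambda>p. blk s Wm (j0 ! p) (j0 ! Suc p)) [0..<l] = map Bz [0..<l]"
      proof (rule map_cong[OF refl])
        fix p assume "p \<in> set [0..<l]"
        then have p: "p < l" by simp
        then have "j0 ! p = p" "j0 ! Suc p = Suc p" unfolding j0_def by (simp_all del: upt_Suc add: nth_upt)
        then show "blk s Wm (j0 ! p) (j0 ! Suc p) = Bz p" using blkW[of p "Suc p"] p m by simp
      qed
      show ?thesis unfolding T_def True mq by (rule refl)
    qed
    finally show ?thesis using od True by simp
  qed
qed


lemma scale_zero_imp:
  assumes V: "module sc" and h: "\<And>a b. sc c (Z a b) = 0" and Z: "Z \<noteq> (\<lambda>a b. 0)"
  shows "c = (0::complex)"
proof (rule ccontr)
  interpret module sc by fact
  assume c: "c \<noteq> 0"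
  have "Z a b = 0" for a b
  proof -
    have "Z a b = sc (inverse c * c) (Z a b)" using c by simp
    also have "\<dots> = sc (inverse c) (sc c (Z a b))" by simp
    finally show ?thesis using h by simp
  qed
  then have "Z = (\<lambda>a b. 0)" by (intro ext)
  then show False using Z by simp
qed

lemma lincomb1: "lincomb sc (Suc 0) c u = (\<lambda>a b. sc (c 0) (u 0 a b))"
  unfolding lincomb_def by simp

lemma lincomb2: "lincomb sc 2 c u = (\<lambda>a b. sc (c 0) (u 0 a b) + sc (c 1) (u 1 a b))"
  unfolding lincomb_def by (simp add: numeral_2_eq_2)

lemma fo_use:
  assumes "finitely_open sc A" "\<forall>i<k. u i \<in> dimmat n n"
    "\<forall>c. lincomb sc k c u = (\<lambda>a b. 0) \<longrightarrow> (\<forall>i<k. c i = 0)" "(n, lincomb sc k c u) \<in> A"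
  shows "\<exists>\<epsilon>>0. \<forall>d. (\<forall>i<k. cmod (d i - c i) < \<epsilon>) \<longrightarrow> (n, lincomb sc k d u) \<in> A"
  using assms unfolding finitely_open_def by blast

lemma exists_t:
  assumes V: "module scV" and Gam_open: "finitely_open scV \<Gamma>"
    and G0: "(N, D) \<in> \<Gamma>" and dD: "D \<in> dimmat N N" and dZ: "Z \<in> dimmat N N"
  shows "\<exists>t. t \<noteq> 0 \<and> (N, (\<lambda>a b. D a b + scV t (Z a b))) \<in> \<Gamma>"
proof -
  interpret module scV by fact
  show ?thesis
  proof (cases "Z = (\<lambda>a b. 0)")
    case True
    then show ?thesis using G0 by (intro exI[of _ 1]) simp
  next
    case Z0: False
    show ?thesis
    proof (cases "\<exists>a. D = (\<lambda>x y. scV a (Z x y))")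
      case True
      then obtain a where a: "D = (\<lambda>x y. scV a (Z x y))" by blast
      let ?u = "\<lambda>i::nat. Z"
      have ind: "\<forall>c. lincomb scV (Suc 0) c ?u = (\<lambda>a b. 0) \<longrightarrow> (\<forall>i<Suc 0. c i = 0)"
      proof (rule allI, rule impI)
        fix c :: "nat \<Rightarrow> complex" assume "lincomb scV (Suc 0) c ?u = (\<lambda>a b. 0)"
        then have "scV (c 0) (Z x y) = 0" for x y unfolding lincomb1
          by (drule_tac x=x in fun_cong, drule_tac x=y in fun_cong) simp
        then have "c 0 = 0" using scale_zero_imp[OF V _ Z0] by blast
        then show "\<forall>i<Suc 0. c i = 0" by simp
      qed
      have "(N, lincomb scV (Suc 0) (\<lambda>_. a) ?u) \<in> \<Gamma>" using G0 a unfolding lincomb1 by simp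
      then obtain e where e: "e > 0" and op: "\<And>d. (\<forall>i<Suc 0. cmod (d i - a) < e) \<Longrightarrow> (N, lincomb scV (Suc 0) d ?u) \<in> \<Gamma>"
        using fo_use[OF Gam_open _ ind, of N "\<lambda>_. a"] dZ by auto
      let ?t = "complex_of_real (e / 2)"
      have "(N, lincomb scV (Suc 0) (\<lambda>_. a + ?t) ?u) \<in> \<Gamma>" using e by (intro op) (simp add: norm_divide)
      moreover have "lincomb scV (Suc 0) (\<lambda>_. a + ?t) ?u = (\<lambda>x y. D x y + scV ?t (Z x y))"
        unfolding lincomb1 a by (simp add: scale_left_distrib)
      ultimately show ?thesis using e by (intro exI[of _ ?t]) simp
    next
      case nD: False
      let ?u = "\<lambda>i::nat. if i = 0 then D else Z"
      have ind: "\<forall>c. lincomb scV 2 c ?u = (\<lambda>a b. 0) \<longrightarrow> (\<forall>i<2. c i = 0)"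
      proof (rule allI, rule impI)
        fix c :: "nat \<Rightarrow> complex" assume "lincomb scV 2 c ?u = (\<lambda>a b. 0)"
        then have h: "scV (c 0) (D x y) + scV (c 1) (Z x y) = 0" for x y unfolding lincomb2
          by (drule_tac x=x in fun_cong, drule_tac x=y in fun_cong) simp
        have c0: "c 0 = 0"
        proof (rule ccontr)
          assume c0: "c 0 \<noteq> 0"
          have "D x y = scV (- (inverse (c 0) * c 1)) (Z x y)" for x y
          proof -
            have "D x y = scV (inverse (c 0) * c 0) (D x y)" using c0 by simp
            also have "\<dots> = scV (inverse (c 0)) (scV (c 0) (D x y))" by simp
            also have "scV (c 0) (D x y) = - scV (c 1) (Z x y)" using h[of x y] by (simp add: eq_neg_iff_add_eq_0)
            finally show ?thesis by simp
          qed
          then show False using nD by blast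
        qed
        then have "scV (c 1) (Z x y) = 0" for x y using h[of x y] by simp
        then have "c 1 = 0" using scale_zero_imp[OF V _ Z0] by blast
        then show "\<forall>i<2. c i = 0" using c0 by (auto simp: less_2_cases_iff)
      qed
      have du: "\<forall>i<2. ?u i \<in> dimmat N N" using dD dZ by simp
      let ?c0 = "\<lambda>i::nat. if i = 0 then 1 else (0::complex)"
      have "(N, lincomb scV 2 ?c0 ?u) \<in> \<Gamma>" using G0 unfolding lincomb2 by simp
      then obtain e where e: "e > 0" and op: "\<And>d. (\<forall>i<2. cmod (d i - ?c0 i) < e) \<Longrightarrow> (N, lincomb scV 2 d ?u) \<in> \<Gamma>"
        using fo_use[OF Gam_open du ind, of ?c0] by auto
      let ?t = "complex_of_real (e / 2)"
      let ?d = "\<lambda>i::nat. if i = 0 then 1 else ?t"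
      have "(N, lincomb scV 2 ?d ?u) \<in> \<Gamma>" using e by (intro op) (auto simp: norm_divide less_2_cases_iff)
      moreover have "lincomb scV 2 ?d ?u = (\<lambda>x y. D x y + scV ?t (Z x y))"
        unfolding lincomb2 by simp
      ultimately show ?thesis using e by (intro exI[of _ ?t]) simp
    qed
  qed
qed

theorem theorem7p9:
  fixes scV :: "complex \<Rightarrow> 'v::ab_group_add \<Rightarrow> 'v"
    and scW :: "complex \<Rightarrow> 'w::banach \<Rightarrow> 'w"
    and nrm :: "nat \<Rightarrow> 'w mtx \<Rightarrow> real"
    and \<Omega> \<Gamma> :: "(nat \<times> 'v mtx) set"
    and f :: "nat \<times> 'v mtx \<Rightarrow> 'w mtx"
    and s :: nat and Y :: "'v mtx"
    and fl :: "nat \<Rightarrow> 'v mtx list \<Rightarrow> 'w mtx"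
  assumes V: "vector_space scV"
    and W: "complex_banach scW"
    and adm: "admissible_norms scW nrm"
    and Om_nc: "nc_set \<Omega>" and Om_open: "finitely_open scV \<Omega>"
    and f_nc: "nc_fun scV scW \<Omega> f" and f_G: "G_diff scV scW \<Omega> f"
    and s_pos: "0 < s" and Y: "(s, Y) \<in> \<Omega>"
    and Gam_sub: "\<Gamma> \<subseteq> \<Omega>" and Gam_open: "finitely_open scV \<Gamma>"
    and Gam_Y: "\<And>m. 0 < m \<Longrightarrow> (s * m, dpow s Y m) \<in> \<Gamma>"
    and fl_lin: "\<And>l. multilinear scV scW s l (fl l)"
    and series: "\<And>m X. 0 < m \<Longrightarrow> (s * m, X) \<in> \<Gamma> \<Longrightarrow>
        (\<lambda>L. nrm (s * m) (\<lambda>i j. f (s * m, X) i j -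
            (\<Sum>l<L. odot_apply s m (\<lambda>a b. X a b - dpow s Y m a b) l (fl l) i j))) \<longlonglongrightarrow> 0"
  shows "\<forall>l Zs. length Zs = l \<longrightarrow> set Zs \<subseteq> dimmat s s \<longrightarrow>
           fl l Zs = DeltaR scV scW \<Omega> f s (replicate (Suc l) Y) Zs"
proof -
  have V': "module scV" using V module_iff_vector_space by blast
  have W': "module scW" using W unfolding complex_banach_def using module_iff_vector_space by blast
  interpret v: module scV by (rule V')
  interpret w: module scW by (rule W')
  show ?thesis
  proof (intro allI impI)
    fix l :: nat and Zs :: "'v mtx list" assume len: "length Zs = l" and Zd: "set Zs \<subseteq> dimmat s s"
    define m where "m = Suc l"
    have m0: "0 < m" unfolding m_def by simp
    have ZdZ: "\<And>p. p < l \<Longrightarrow> Zs ! p \<in> dimmat s s" using Zd len nth_mem by blast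
    define Zsup :: "'v mtx" where "Zsup = bidiag s (replicate m (\<lambda>a b. 0)) Zs"
    define Xt where "Xt t = (\<lambda>a b. dpow s Y m a b + scV t (Zsup a b))" for t
    have dD: "dpow s Y m \<in> dimmat (s * m) (s * m)" unfolding dpow_def dimmat_def by auto
    have dZ: "Zsup \<in> dimmat (s * m) (s * m)" unfolding Zsup_def bidiag_def dimmat_def by auto
    obtain t where t0: "t \<noteq> 0" and tG: "(s * m, Xt t) \<in> \<Gamma>"
      using exists_t[OF V' Gam_open Gam_Y[OF m0] dD dZ] unfolding Xt_def by blast
    have tO: "(s * m, Xt t) \<in> \<Omega>" using tG Gam_sub by blast
    have fdim: "f (s * m, Xt t) \<in> dimmat (s * m) (s * m)" using f_nc tO unfolding nc_fun_def by blast
    define Wm where "Wm = (\<lambda>a b. Xt t a b - dpow s Y m a b)"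
    define Bz where "Bz a = (\<lambda>x y. scV t ((Zs ! a) x y))" for a
    have blkW: "blk s Wm a b = (if b = Suc a then Bz a else (\<lambda>x y. 0))" if ab: "a < m" "b < m" for a b
    proof (intro ext)
      fix x y
      show "blk s Wm a b x y = (if b = Suc a then Bz a else (\<lambda>x y. 0)) x y"
      proof (cases "x < s \<and> y < s")
        case True
        have lt: "a * s + x < s * m" "b * s + y < s * m" using idx_lt ab True by auto
        have "blk s Wm a b x y = scV t (Zsup (a * s + x) (b * s + y))"
          unfolding blk_def Wm_def Xt_def using True by simp
        also have "\<dots> = (if b = Suc a then Bz a else (\<lambda>x y. 0)) x y"
        proof -
          have dv: "\<And>c. (c * s + x) div s = c" "\<And>c. (c * s + y) div s = c"
              "\<And>c. (c * s + x) mod s = x" "\<And>c. (c * s + y) mod s = y"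
              "\<And>c. (s + c * s + x) div s = Suc c" "\<And>c. (s + c * s + y) div s = Suc c"
              "\<And>c. (s + c * s + x) mod s = x" "\<And>c. (s + c * s + y) mod s = y"
            using True idx_div2 idx_mod2 by simp_all
          show ?thesis unfolding Zsup_def bidiag_def Bz_def using lt True ab dv by (simp del: replicate.simps)
        qed
        finally show ?thesis .
      next
        case False
        have "(if b = Suc a then Bz a else (\<lambda>x y. 0)) x y = 0"
        proof (cases "b = Suc a")
          case True
          then have "a < l" using ab m_def by simp
          then have "(Zs ! a) x y = 0" using ZdZ False unfolding dimmat_def by auto
          then show ?thesis using True unfolding Bz_def by simp
        qed simp
        then show ?thesis unfolding blk_def using False by auto
      qed
    qed
    have mapBz: "map Bz [0..<l] = map (\<lambda>Z a b. scV t (Z a b)) Zs"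
      unfolding Bz_def using len by (intro nth_equalityI) auto
    have fent: "f (s * m, Xt t) x (l * s + y) = scW (t ^ l) (fl l Zs x y)" if xy: "x < s" "y < s" for x y
    proof -
      let ?c = "scW (t ^ l) (fl l Zs x y)"
      have od: "odot_apply s m Wm k (fl k) x (l * s + y) = (if k = l then ?c else 0)" for k
        using odot_entry[OF W' V' s_pos fl_lin m_def blkW xy] mapBz ml_scale[OF W' fl_lin V' len Zd] by simp
      define M where "M L = (\<lambda>i j. f (s * m, Xt t) i j -
            (\<Sum>k<L. odot_apply s m (\<lambda>a b. Xt t a b - dpow s Y m a b) k (fl k) i j))" for L
      have lim: "(\<lambda>L. nrm (s * m) (M L)) \<longlonglongrightarrow> 0" unfolding M_def by (rule series[OF m0 tG])
      have dM: "M L \<in> dimmat (s * m) (s * m)" for L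
        using fdim unfolding M_def dimmat_def odot_apply_def by auto
      have lt: "x < s * m" "l * s + y < s * m" using idx_lt[of 0 m x s] idx_lt[of l m y s] m_def xy by auto
      obtain K where K: "\<And>X. X \<in> dimmat (s * m) (s * m) \<Longrightarrow> norm (X x (l * s + y)) \<le> K * nrm (s * m) X"
        using entry_bound[OF W' adm _ lt] m0 s_pos by auto
      have ev: "\<forall>\<^sub>F L in sequentially. norm (f (s * m, Xt t) x (l * s + y) - ?c) \<le> K * nrm (s * m) (M L)"
      proof (rule eventually_sequentiallyI[of "Suc l"])
        fix L assume L: "Suc l \<le> L"
        have "M L x (l * s + y) = f (s * m, Xt t) x (l * s + y) - ?c"
          unfolding M_def using od[unfolded Wm_def] L by simp
        then show "norm (f (s * m, Xt t) x (l * s + y) - ?c) \<le> K * nrm (s * m) (M L)"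
          using K[OF dM[of L]] by simp
      qed
      have lim2: "(\<lambda>L. K * nrm (s * m) (M L)) \<longlonglongrightarrow> 0"
        using tendsto_mult[OF tendsto_const lim, of K] by simp
      have "norm (f (s * m, Xt t) x (l * s + y) - ?c) \<le> 0"
        using tendsto_le[OF trivial_limit_sequentially lim2 tendsto_const ev] .
      then show ?thesis by simp
    qed
    define D :: "complex mtx" where "D = (\<lambda>a b. if a = b \<and> a < s * m then t ^ (a div s) else 0)"
    define D' :: "complex mtx" where "D' = (\<lambda>a b. if a = b \<and> a < s * m then inverse (t ^ (a div s)) else 0)"
    have P: "inv_pair (s * m) D D'" unfolding D_def D'_def using t0 by (intro inv_pair_diag) simp
    have bd: "bidiag s (replicate m Y) Zs = sim scV (s * m) D D' (Xt t)"
    proof -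
      have "bidiag s (replicate m Y) Zs a b = (if a < s * m \<and> b < s * m then
          scV (inverse (t ^ (b div s)) * t ^ (a div s)) (Xt t a b) else 0)" for a b
      proof (cases "a < s * m \<and> b < s * m")
        case True
        have am: "a div s < m" "b div s < m" using True div_lt by auto
        show ?thesis
        proof (cases "a div s = b div s")
          case True
          then show ?thesis using \<open>a < s * m \<and> b < s * m\<close> am t0
            unfolding bidiag_def Xt_def dpow_def Zsup_def by simp
        next
          case ne: False
          show ?thesis
          proof (cases "b div s = Suc (a div s)")
            case True
            have "inverse (t ^ (b div s)) * t ^ (a div s) * t = 1" using True t0 by (simp add: field_simps)
            then show ?thesis using \<open>a < s * m \<and> b < s * m\<close> am t0 ne True
              unfolding bidiag_def Xt_def dpow_def Zsup_def by simp
          next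
            case False
            then show ?thesis using \<open>a < s * m \<and> b < s * m\<close> am t0 ne
              unfolding bidiag_def Xt_def dpow_def Zsup_def by simp
          qed
        qed
      next
        case False
        then show ?thesis unfolding bidiag_def by auto
      qed
      then show ?thesis unfolding D_def D'_def sim_diag[OF V'] by (intro ext) simp
    qed
    have "DeltaR scV scW \<Omega> f s (replicate (Suc l) Y) Zs
        = blk s (sim scW (s * m) D D' (f (s * m, Xt t))) 0 l"
      unfolding DeltaR_def m_def[symmetric] using len bd nc_ext_eq[OF V' W' Om_nc f_nc tO P] by simp
    also have "\<dots> = fl l Zs"
    proof (intro ext)
      fix x y
      show "blk s (sim scW (s * m) D D' (f (s * m, Xt t))) 0 l x y = fl l Zs x y"
      proof (cases "x < s \<and> y < s")
        case True
        have lt: "x < s * m" "l * s + y < s * m" using idx_lt[of 0 m x s] idx_lt[of l m y s] m_def True by auto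
        have "blk s (sim scW (s * m) D D' (f (s * m, Xt t))) 0 l x y
            = scW (inverse (t ^ l) * 1) (f (s * m, Xt t) x (l * s + y))"
          unfolding blk_def D_def D'_def sim_diag[OF W'] using True lt by simp
        also have "\<dots> = fl l Zs x y" using fent True t0 by simp
        finally show ?thesis .
      next
        case False
        have "fl l Zs \<in> dimmat s s" using fl_lin len Zd unfolding multilinear_def by blast
        then show ?thesis using False unfolding blk_def dimmat_def by auto
      qed
    qed
    finally show "fl l Zs = DeltaR scV scW \<Omega> f s (replicate (Suc l) Y) Zs" by simp
  qed
qed

end
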